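(* Let $K\subset\mathbb{R}^n$ be a closed convex set, $y\in\mathbb{R}^n$, $\nu\in K$, and $C\ge 2$ (with $C>2$). For each $m\ge1$ let $\nu_m(y)$ be the output of the Algorithm in the context applied to the bounded convex set $K_m=B(\nu,2^m)\cap K$ with data $y$ (and any starting point in $K_m$). Then all the points $\nu_m(y)$, $m\ge1$, lie in a compact subset of $\mathbb{R}^n$.
   Context: $\|\cdot\|$ is the Euclidean norm, $B(\theta,r)$ the closed Euclidean ball. Algorithm (for a nonempty bounded convex set $L$ with $d=\operatorname{diam}(L)$, constant $C>2$, starting point $\nu_0\in L$): before seeing data, for every $\theta\in L$ and $k\ge1$ fix a maximal (under inclusion) $\frac{d}{2^k(C+1)}$-packing $M_k(\theta)$ of $B(\theta,d/2^{k-1})\cap L$ (distinct points at mutual distance $\ge\frac{d}{2^k(C+1)}$). Given $y$, put $\Upsilon_1=\nu_0$ and $\Upsilon_{k+1}=\arg\min_{\nu\in M_k(\Upsilon_k)}\|y-\nu\|$ (ties: lexicographically least); output $\lim_k\Upsilon_k$ (the sequence is Cauchy). *)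

theory Defs
  imports "HOL-Analysis.Analysis"
begin

text \<open>Points of R^n are vectors real^'n; the index type 'n is finite and
  well-ordered, so that the lexicographic order on coordinates is meaningful.\<close>

definition lex_le :: "real^'n::{finite,wellorder} \<Rightarrow> real^'n::{finite,wellorder} \<Rightarrow> bool" where
  "lex_le x z \<longleftrightarrow> x = z \<or> (\<exists>i. x$i < z$i \<and> (\<forall>j<i. x$j = z$j))"

definition is_packing :: "real \<Rightarrow> 'a::metric_space set \<Rightarrow> bool" where
  "is_packing r P \<longleftrightarrow> (\<forall>x\<in>P. \<forall>z\<in>P. x \<noteq> z \<longrightarrow> r \<le> dist x z)"

definition maximal_packing :: "'a::metric_space set \<Rightarrow> real \<Rightarrow> 'a set \<Rightarrow> bool" where
  "maximal_packing S r P \<longleftrightarrow> P \<subseteq> S \<and> is_packing r P \<and>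
     (\<forall>Q. P \<subseteq> Q \<and> Q \<subseteq> S \<and> is_packing r Q \<longrightarrow> Q = P)"

definition admissible_packings ::
  "'a::real_normed_vector set \<Rightarrow> real \<Rightarrow> (nat \<Rightarrow> 'a \<Rightarrow> 'a set) \<Rightarrow> bool" where
  "admissible_packings L C M \<longleftrightarrow>
     (\<forall>k\<ge>1. \<forall>\<theta>\<in>L. maximal_packing (cball \<theta> (diameter L / 2^(k-1)) \<inter> L)
                                      (diameter L / (2^k * (C+1))) (M k \<theta>))"

definition closest_lex :: "real^'n::{finite,wellorder} \<Rightarrow> (real^'n::{finite,wellorder}) set \<Rightarrow> real^'n::{finite,wellorder}" where
  "closest_lex y P = (THE z. z \<in> P \<and> (\<forall>w\<in>P. norm (y - z) \<le> norm (y - w)) \<and>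
        (\<forall>w\<in>P. norm (y - w) = norm (y - z) \<longrightarrow> lex_le z w))"

text \<open>The iterates: upsilon M nu0 y k = Upsilon_(k+1) of the paper
  (Upsilon_1 = nu0, Upsilon_(k+1) = closest point of M_k(Upsilon_k) to y).\<close>
primrec upsilon :: "(nat \<Rightarrow> real^'n::{finite,wellorder} \<Rightarrow> (real^'n::{finite,wellorder}) set) \<Rightarrow> real^'n::{finite,wellorder}
                    \<Rightarrow> real^'n::{finite,wellorder} \<Rightarrow> nat \<Rightarrow> real^'n::{finite,wellorder}" where
  "upsilon M \<nu>0 y 0 = \<nu>0"
| "upsilon M \<nu>0 y (Suc k) = closest_lex y (M (Suc k) (upsilon M \<nu>0 y k))"

definition alg_output :: "(nat \<Rightarrow> real^'n::{finite,wellorder} \<Rightarrow> (real^'n::{finite,wellorder}) set) \<Rightarrow> real^'n::{finite,wellorder}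
                    \<Rightarrow> real^'n::{finite,wellorder} \<Rightarrow> real^'n::{finite,wellorder}" where
  "alg_output M \<nu>0 y = lim (upsilon M \<nu>0 y)"

end

theory Submission
  imports Defs
begin

lemma lex_antisym:
  fixes x z :: "real^'n::{finite,wellorder}"
  assumes "lex_le x z" "lex_le z x" shows "x = z"
proof (rule ccontr)
  assume ne: "x \<noteq> z"
  then obtain i where i: "x$i < z$i" "\<forall>j<i. x$j = z$j" using assms(1) unfolding lex_le_def by blast
  obtain j where j: "z$j < x$j" "\<forall>k<j. z$k = x$k" using assms(2) ne unfolding lex_le_def by blast
  show False
  proof (cases i j rule: linorder_cases)
    case less then show ?thesis using i j by force
  next
    case equal then show ?thesis using i j by force
  next
    case greater then show ?thesis using i j by force
  qed
qed

lemma lex_trans: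
  fixes x z w :: "real^'n::{finite,wellorder}"
  assumes "lex_le x z" "lex_le z w" shows "lex_le x w"
proof -
  consider "x = z" | "z = w" | "x \<noteq> z \<and> z \<noteq> w" by blast
  then show ?thesis
  proof cases
    case 1 then show ?thesis using assms by simp
  next
    case 2 then show ?thesis using assms by simp
  next
    case 3
    obtain i where i: "x$i < z$i" "\<forall>j<i. x$j = z$j" using assms(1) 3 unfolding lex_le_def by blast
    obtain j where j: "z$j < w$j" "\<forall>k<j. z$k = w$k" using assms(2) 3 unfolding lex_le_def by blast
    show ?thesis
    proof (cases i j rule: linorder_cases)
      case less then show ?thesis using i j unfolding lex_le_def
        by (intro disjI2 exI[of _ i]) force
    next
      case equal then show ?thesis using i j unfolding lex_le_def
        by (intro disjI2 exI[of _ i]) force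
    next
      case greater then show ?thesis using i j unfolding lex_le_def
        by (intro disjI2 exI[of _ j]) force
    qed
  qed
qed

lemma lex_total:
  fixes x z :: "real^'n::{finite,wellorder}"
  shows "lex_le x z \<or> lex_le z x"
proof (cases "x = z")
  case True then show ?thesis by (simp add: lex_le_def)
next
  case False
  then obtain i0 where "x$i0 \<noteq> z$i0" by (auto simp: vec_eq_iff)
  define i where "i = (LEAST i. x$i \<noteq> z$i)"
  have ne: "x$i \<noteq> z$i" unfolding i_def by (rule LeastI[of _ i0]) fact
  have below: "\<forall>j<i. x$j = z$j" unfolding i_def using not_less_Least by blast
  show ?thesis
  proof (cases "x$i < z$i")
    case True then show ?thesis using below unfolding lex_le_def by blast
  next
    case False then have "z$i < x$i" using ne by linarith
    then show ?thesis using below unfolding lex_le_def by fastforce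
  qed
qed

lemma lex_min_exists:
  fixes Z :: "(real^'n::{finite,wellorder}) set"
  assumes "finite Z" "Z \<noteq> {}" shows "\<exists>z\<in>Z. \<forall>w\<in>Z. lex_le z w"
  using assms
proof (induction Z rule: finite_ne_induct)
  case (singleton x) then show ?case by (simp add: lex_le_def)
next
  case (insert x F)
  then obtain m where m: "m \<in> F" "\<forall>w\<in>F. lex_le m w" by blast
  show ?case
  proof (cases "lex_le x m")
    case True then show ?thesis using m lex_trans by (metis insert_iff lex_le_def)
  next
    case False then have "lex_le m x" using lex_total by blast
    then show ?thesis using m by blast
  qed
qed

lemma closest_lex_prop:
  fixes Q :: "(real^'n::{finite,wellorder}) set"
  assumes "finite Q" "Q \<noteq> {}"
  shows "closest_lex y Q \<in> Q \<and> (\<forall>w\<in>Q. norm (y - closest_lex y Q) \<le> norm (y - w))"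
proof -
  define Z where "Z = {z\<in>Q. \<forall>w\<in>Q. norm (y - z) \<le> norm (y - w)}"
  obtain z0 where z0: "z0 \<in> Q" "\<forall>w\<in>Q. norm (y - z0) \<le> norm (y - w)"
    using ex_min_if_finite[OF finite_imageI[OF assms(1), of "\<lambda>z. norm (y - z)"]] assms(2)
    by (metis (no_types, lifting) arg_min_if_finite(1) arg_min_if_finite(2) assms(1) not_le)
  have "finite Z" "Z \<noteq> {}" using assms(1) z0 unfolding Z_def by auto
  then obtain z where z: "z \<in> Z" "\<forall>w\<in>Z. lex_le z w" using lex_min_exists by blast
  let ?P = "\<lambda>z. z \<in> Q \<and> (\<forall>w\<in>Q. norm (y - z) \<le> norm (y - w)) \<and>
        (\<forall>w\<in>Q. norm (y - w) = norm (y - z) \<longrightarrow> lex_le z w)"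
  have Pz: "?P z"
  proof -
    have "z \<in> Q" "\<forall>w\<in>Q. norm (y - z) \<le> norm (y - w)" using z(1) unfolding Z_def by auto
    moreover have "\<forall>w\<in>Q. norm (y - w) = norm (y - z) \<longrightarrow> lex_le z w"
    proof (intro ballI impI)
      fix w assume "w \<in> Q" "norm (y - w) = norm (y - z)"
      then have "w \<in> Z" using calculation unfolding Z_def by auto
      then show "lex_le z w" using z(2) by blast
    qed
    ultimately show ?thesis by blast
  qed
  have uniq: "\<And>u. ?P u \<Longrightarrow> u = z"
  proof -
    fix u assume Pu: "?P u"
    have "norm (y - u) = norm (y - z)" using Pu Pz by (meson order_antisym)
    then have "lex_le u z" "lex_le z u" using Pu Pz by auto
    then show "u = z" using lex_antisym by blast
  qed
  have "closest_lex y Q = z" unfolding closest_lex_def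
    using the_equality[of ?P z] Pz uniq by blast
  then show ?thesis using Pz by simp
qed

lemma packing_near:
  fixes S :: "'a::metric_space set"
  assumes "maximal_packing S r P" "x \<in> S" "0 \<le> r"
  shows "\<exists>q\<in>P. dist q x \<le> r"
proof (rule ccontr)
  assume "\<not> ?thesis"
  then have far: "\<forall>q\<in>P. r < dist q x" by force
  have "is_packing r (insert x P)" using assms(1) far unfolding maximal_packing_def is_packing_def
    by (auto simp: dist_commute less_imp_le)
  moreover have "P \<subseteq> insert x P" "insert x P \<subseteq> S" using assms unfolding maximal_packing_def by auto
  ultimately have "insert x P = P" using assms(1) unfolding maximal_packing_def by blast
  then have "x \<in> P" by blast
  then show False using far assms(3) by force
qed

lemma packing_finite:
  fixes S :: "'a::heine_borel set"
  assumes "maximal_packing S r P" "bounded S" "0 < r"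
  shows "finite P"
proof -
  have "compact (closure S)" using assms(2) by (simp add: compact_closure)
  then obtain k where k: "finite k" "closure S \<subseteq> (\<Union>x\<in>k. ball x (r/2))"
  proof -
    have "r/2 > 0" using assms(3) by simp
    then show ?thesis using seq_compact_imp_totally_bounded[OF compact_imp_seq_compact[OF \<open>compact (closure S)\<close>]] that
      by blast
  qed
  have PS: "P \<subseteq> S" using assms(1) unfolding maximal_packing_def by auto
  have "\<forall>q\<in>P. \<exists>x\<in>k. q \<in> ball x (r/2)" using k PS closure_subset by blast
  then obtain f where f: "\<forall>q\<in>P. f q \<in> k \<and> q \<in> ball (f q) (r/2)" by metis
  have "inj_on f P"
  proof (rule inj_onI)
    fix a b assume ab: "a \<in> P" "b \<in> P" "f a = f b"
    have "dist a b \<le> dist (f a) a + dist (f b) b" using ab(3) by (metis dist_commute dist_triangle)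
    also have "\<dots> < r"
    proof -
      have "dist (f a) a < r/2" "dist (f b) b < r/2" using f ab(1,2) unfolding mem_ball by auto
      then show ?thesis by linarith
    qed
    finally show "a = b" using assms(1) ab unfolding maximal_packing_def is_packing_def by force
  qed
  then show ?thesis using inj_on_finite[of f P k] f k by blast
qed


lemma geom_seq:
  fixes U :: "nat \<Rightarrow> 'a::complete_space"
  assumes step: "\<And>k. dist (U k) (U (Suc k)) \<le> d / 2^k" and d: "0 \<le> d"
  shows "convergent U" "\<And>k. dist (lim U) (U k) \<le> 2 * d / 2^k"
proof -
  have acc: "dist (U k) (U (k + j)) \<le> 2 * d / 2^k - 2 * d / 2^(k+j)" for k j
  proof (induction j)
    case 0 then show ?case by simp
  next
    case (Suc j)
    have "dist (U k) (U (k + Suc j)) \<le> dist (U k) (U (k + j)) + dist (U (k+j)) (U (Suc (k + j)))"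
      by (simp add: dist_triangle)
    also have "\<dots> \<le> 2 * d / 2^k - 2 * d / 2^(k+j) + d / 2^(k+j)" using Suc step[of "k+j"] by simp
    also have "\<dots> = 2 * d / 2^k - 2 * d / 2^(k + Suc j)" by (simp add: field_simps)
    finally show ?case .
  qed
  have acc2: "dist (U k) (U n) \<le> 2 * d / 2^k" if "k \<le> n" for k n
  proof -
    have "dist (U k) (U (k + (n-k))) \<le> 2 * d / 2^k - 2 * d / 2^(k+(n-k))" by (rule acc)
    moreover have "0 \<le> 2 * d / 2^(k+(n-k))" using d by simp
    ultimately show ?thesis using that by simp
  qed
  have "Cauchy U"
  proof (rule metric_CauchyI)
    fix e :: real assume e: "0 < e"
    obtain N where N: "(1/2::real)^N < e / (4*d+1)"
      using real_arch_pow_inv[of "e/(4*d+1)" "1/2::real"] e d by auto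
    have "4 * d / 2^N < e"
    proof -
      have "4 * d / 2^N \<le> (4*d+1) * (1/2)^N" using d by (simp add: field_simps)
      also have "\<dots> < (4*d+1) * (e/(4*d+1))" using N d by (intro mult_strict_left_mono) auto
      also have "\<dots> = e" using d by simp
      finally show ?thesis .
    qed
    show "\<exists>M. \<forall>m\<ge>M. \<forall>n\<ge>M. dist (U m) (U n) < e"
    proof (intro exI allI impI)
      fix m n assume "N \<le> m" "N \<le> n"
      have "dist (U m) (U n) \<le> dist (U N) (U m) + dist (U N) (U n)" by (rule dist_triangle3)
      also have "\<dots> \<le> 4 * d / 2^N" using acc2[OF \<open>N \<le> m\<close>] acc2[OF \<open>N \<le> n\<close>] by simp
      finally show "dist (U m) (U n) < e" using \<open>4 * d / 2^N < e\<close> by simp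
    qed
  qed
  then show conv: "convergent U" by (simp add: Cauchy_convergent_iff)
  fix k
  have "U \<longlonglongrightarrow> lim U" using conv by (simp add: convergent_LIMSEQ_iff)
  then have "(\<lambda>n. dist (U n) (U k)) \<longlonglongrightarrow> dist (lim U) (U k)" by (intro tendsto_intros)
  moreover have "\<exists>N. \<forall>n\<ge>N. dist (U n) (U k) \<le> 2 * d / 2^k"
    using acc2 by (metis dist_commute)
  ultimately show "dist (lim U) (U k) \<le> 2 * d / 2^k" by (rule LIMSEQ_le_const2)
qed


lemma key:
  fixes L :: "(real^'n::{finite,wellorder}) set"
    and P :: "nat \<Rightarrow> real^'n::{finite,wellorder} \<Rightarrow> (real^'n::{finite,wellorder}) set"
  assumes bL: "bounded L" and nuL: "\<nu> \<in> L" and n0L: "\<nu>0 \<in> L" and C: "C \<ge> 2"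
    and adm: "admissible_packings L C P"
  shows "dist \<nu> (alg_output P \<nu>0 y) \<le> (2*C+5) * dist y \<nu>"
proof -
  define U where "U = upsilon P \<nu>0 y"
  define d where "d = diameter L"
  define D where "D = dist y \<nu>"
  define E where "E = (2*C+5) * D"
  define r where "r = (\<lambda>k::nat. d / 2^k)"
  define \<delta> where "\<delta> = (\<lambda>k::nat. d / (2^(Suc k) * (C+1)))"
  have d0: "0 \<le> d" unfolding d_def using bL by (rule diameter_ge_0)
  have D0: "0 \<le> D" unfolding D_def by simp
  have rSuc: "r (Suc k) = (C+1) * \<delta> k" for k 
  proof -
    have "C + 1 \<noteq> 0" using C by simp
    then show ?thesis unfolding r_def \<delta>_def by simp
  qed
  have rhalf: "r (Suc k) = r k / 2" for k unfolding r_def by simp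
  have \<delta>0: "0 \<le> \<delta> k" for k unfolding \<delta>_def using d0 C by simp
  have mp: "maximal_packing (cball \<theta> (r k) \<inter> L) (\<delta> k) (P (Suc k) \<theta>)" if "\<theta> \<in> L" for \<theta> k
  proof -
    have "maximal_packing (cball \<theta> (diameter L / 2^(Suc k - 1)) \<inter> L) (diameter L / (2^Suc k * (C+1))) (P (Suc k) \<theta>)"
    proof -
      have H: "\<And>j \<theta>'. 1 \<le> j \<Longrightarrow> \<theta>' \<in> L \<Longrightarrow> maximal_packing (cball \<theta>' (diameter L / 2^(j - 1)) \<inter> L) (diameter L / (2^j * (C+1))) (P j \<theta>')"
        using adm unfolding admissible_packings_def by blast
      show ?thesis by (rule H) (use that in auto)
    qed
    then show ?thesis unfolding r_def \<delta>_def d_def by simp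
  qed
  have fin: "finite (P (Suc k) \<theta>) \<and> P (Suc k) \<theta> \<noteq> {} \<and> P (Suc k) \<theta> \<subseteq> cball \<theta> (r k) \<inter> L"
    if th: "\<theta> \<in> L" for \<theta> k
  proof -
    have sub: "P (Suc k) \<theta> \<subseteq> cball \<theta> (r k) \<inter> L" using mp[OF th] unfolding maximal_packing_def by auto
    have "\<theta> \<in> cball \<theta> (r k) \<inter> L" using th d0 unfolding r_def by simp
    then have ne: "P (Suc k) \<theta> \<noteq> {}" using packing_near[OF mp[OF th] _ \<delta>0] by blast
    have "finite (P (Suc k) \<theta>)"
    proof (cases "d = 0")
      case True
      then have "cball \<theta> (r k) \<inter> L \<subseteq> {\<theta>}" unfolding r_def by auto
      then show ?thesis using sub finite_subset by (metis finite.emptyI finite_insert)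
    next
      case False
      then have "0 < \<delta> k" unfolding \<delta>_def using d0 C by simp
      then show ?thesis using packing_finite[OF mp[OF th]] bL by (meson bounded_Int)
    qed
    then show ?thesis using ne sub by blast
  qed
  have UL: "U k \<in> L" for k
  proof (induction k)
    case 0 then show ?case using n0L unfolding U_def by simp
  next
    case (Suc k)
    have "U (Suc k) = closest_lex y (P (Suc k) (U k))" unfolding U_def by simp
    then show ?case using closest_lex_prop[of "P (Suc k) (U k)" y] fin[OF Suc] by auto
  qed
  have Ustep: "U (Suc k) \<in> P (Suc k) (U k) \<and> (\<forall>w\<in>P (Suc k) (U k). norm (y - U (Suc k)) \<le> norm (y - w))" for k
  proof -
    have "U (Suc k) = closest_lex y (P (Suc k) (U k))" unfolding U_def by simp
    then show ?thesis using closest_lex_prop[of "P (Suc k) (U k)" y] fin[OF UL[of k]] by auto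
  qed
  have Udist: "dist (U k) (U (Suc k)) \<le> r k" for k
    using Ustep[of k] fin[OF UL[of k], of k] by auto
  have inv: "dist (U k) \<nu> \<le> r k \<or> dist (U k) \<nu> + 2 * r k \<le> E" for k
  proof (induction k)
    case 0
    have "dist (U 0) \<nu> \<le> d" unfolding d_def using diameter_bounded_bound[OF bL UL[of 0] nuL] .
    then show ?case unfolding r_def by simp
  next
    case (Suc k)
    show ?case
    proof (cases "dist (U k) \<nu> \<le> r k")
      case True
      then have "\<nu> \<in> cball (U k) (r k) \<inter> L" using nuL by simp
      then obtain q where q: "q \<in> P (Suc k) (U k)" "dist q \<nu> \<le> \<delta> k"
        using packing_near[OF mp[OF UL[of k]] _ \<delta>0] by blast
      have "norm (y - U (Suc k)) \<le> norm (y - q)" using Ustep[of k] q by blast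
      also have "\<dots> \<le> D + \<delta> k"
      proof -
        have "norm (y - q) = dist y q" by (simp add: dist_norm)
        also have "\<dots> \<le> dist y \<nu> + dist \<nu> q" by (rule dist_triangle)
        also have "\<dots> = D + dist q \<nu>" unfolding D_def by (simp add: dist_commute)
        finally show ?thesis using q(2) by simp
      qed
      finally have a: "norm (y - U (Suc k)) \<le> D + \<delta> k" .
      have b: "dist (U (Suc k)) \<nu> \<le> 2 * D + \<delta> k"
      proof -
        have "dist (U (Suc k)) \<nu> \<le> dist (U (Suc k)) y + dist y \<nu>" by (rule dist_triangle)
        also have "\<dots> = norm (y - U (Suc k)) + D" unfolding D_def by (simp add: dist_norm norm_minus_commute)
        finally show ?thesis using a by simp
      qed
      show ?thesis
      proof (cases "\<delta> k \<le> D")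
        case True
        have "dist (U (Suc k)) \<nu> + 2 * r (Suc k) \<le> 3 * D + 2 * ((C+1) * D)"
        proof -
          have "(C+1) * \<delta> k \<le> (C+1) * D" using True C by (intro mult_left_mono) auto
          then show ?thesis using b True rSuc[of k] by linarith
        qed
        also have "\<dots> = E" unfolding E_def by (simp add: algebra_simps)
        finally show ?thesis by simp
      next
        case False
        have "2 * D + \<delta> k \<le> (C+1) * \<delta> k"
        proof -
          have "2 * \<delta> k \<le> C * \<delta> k" using C \<delta>0[of k] by (simp add: mult_right_mono)
          then show ?thesis using False by (simp add: algebra_simps)
        qed
        then show ?thesis using b rSuc[of k] by simp
      qed
    next
      case False
      then have h: "dist (U k) \<nu> + 2 * r k \<le> E" using Suc by simp
      have "dist (U (Suc k)) \<nu> \<le> dist (U k) (U (Suc k)) + dist (U k) \<nu>"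
        by (metis dist_commute dist_triangle)
      then have "dist (U (Suc k)) \<nu> + 2 * r (Suc k) \<le> E" using Udist[of k] h rhalf[of k] by simp
      then show ?thesis by simp
    qed
  qed
  have gs: "dist (lim U) (U k) \<le> 2 * d / 2^k" for k
    using geom_seq(2)[of U d] Udist d0 unfolding r_def by blast
  have bnd: "dist \<nu> (lim U) \<le> E + 3 * r k" for k
  proof -
    have "dist \<nu> (lim U) \<le> dist (U k) \<nu> + dist (lim U) (U k)" by (metis dist_commute dist_triangle)
    also have "\<dots> \<le> dist (U k) \<nu> + 2 * r k" using gs[of k] unfolding r_def by simp
    finally have f: "dist \<nu> (lim U) \<le> dist (U k) \<nu> + 2 * r k" .
    have "0 \<le> E" unfolding E_def using C D0 by simp
    moreover have "0 \<le> r k" unfolding r_def using d0 by simp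
    ultimately show ?thesis using f inv[of k] by linarith
  qed
  have "dist \<nu> (lim U) \<le> E"
  proof (rule field_le_epsilon)
    fix e :: real assume e: "0 < e"
    obtain N where N: "(1/2::real)^N < e / (3*d+1)"
      using real_arch_pow_inv[of "e/(3*d+1)" "1/2::real"] e d0 by auto
    have "3 * r N < e"
    proof -
      have "3 * r N \<le> (3*d+1) * (1/2)^N" using d0 unfolding r_def by (simp add: field_simps)
      also have "\<dots> < (3*d+1) * (e/(3*d+1))" using N d0 by (intro mult_strict_left_mono) auto
      also have "\<dots> = e" using d0 by simp
      finally show ?thesis .
    qed
    then show "dist \<nu> (lim U) \<le> E + e" using bnd[of N] by simp
  qed
  then show ?thesis unfolding alg_output_def U_def E_def D_def by simp
qed


theorem mainTheorem16:
  fixes K :: "(real^'n::{finite,wellorder}) set"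
    and y \<nu> :: "real^'n::{finite,wellorder}"
    and C :: real
    and M :: "nat \<Rightarrow> nat \<Rightarrow> real^'n::{finite,wellorder} \<Rightarrow> (real^'n::{finite,wellorder}) set"
    and s :: "nat \<Rightarrow> real^'n::{finite,wellorder}"
  assumes "closed K" and "convex K" and "\<nu> \<in> K"
    and "C \<ge> 2" and "C > 2"
    and "\<And>m. m \<ge> 1 \<Longrightarrow> admissible_packings (cball \<nu> (2^m) \<inter> K) C (M m)"
    and "\<And>m. m \<ge> 1 \<Longrightarrow> s m \<in> cball \<nu> (2^m) \<inter> K"
  shows "\<exists>S. compact S \<and> (\<forall>m\<ge>1. alg_output (M m) (s m) y \<in> S)"
proof (intro exI conjI allI impI)
  show "compact (cball \<nu> ((2*C+5) * dist y \<nu>))" by simp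
  fix m :: nat assume m: "1 \<le> m"
  have "dist \<nu> (alg_output (M m) (s m) y) \<le> (2*C+5) * dist y \<nu>"
  proof (rule key)
    show "bounded (cball \<nu> (2^m) \<inter> K)" by (simp add: bounded_Int)
    show "\<nu> \<in> cball \<nu> (2^m) \<inter> K" using assms(3) by simp
  qed (use assms m in auto)
  then show "alg_output (M m) (s m) y \<in> cball \<nu> ((2*C+5) * dist y \<nu>)" by simp
qed

end
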